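(* Let $f:\mathbb{R}^n\to\mathbb{R}$ be twice continuously differentiable with $L$-Lipschitz gradient. If $0<\alpha<\frac1L$, then each map $g^s_{\alpha f}(x)=x-\alpha U_s\nabla_sf(x)$, $s=1,\dots,p$, is a diffeomorphism of $\mathbb{R}^n$.
   Context: $\|\nabla f(x)-\nabla f(y)\|\le L\|x-y\|$ for all $x,y$, $L>0$. The variable is partitioned as $x=(x(1),\dots,x(p))$, $x(s)\in\mathbb{R}^{n_s}$, $\sum_sn_s=n$; $U_s\in\mathbb{R}^{n\times n_s}$ is the $s$-th block-column of $I_n$ and $\nabla_sf(x)=U_s^T\nabla f(x)$. *)

theory Defs
  imports "HOL-Analysis.Analysis"
begin

definition C1_map :: "(real^'n \<Rightarrow> real^'n) \<Rightarrow> bool" where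
  "C1_map g \<longleftrightarrow> (\<exists>D :: real^'n \<Rightarrow> ((real^'n) \<Rightarrow>\<^sub>L (real^'n)).
      (\<forall>x. (g has_derivative blinfun_apply (D x)) (at x)) \<and> continuous_on UNIV D)"

definition diffeomorphism :: "(real^'n \<Rightarrow> real^'n) \<Rightarrow> bool" where
  "diffeomorphism g \<longleftrightarrow> bij g \<and> C1_map g \<and> C1_map (inv g)"

text \<open>U_s U_s^T v: keep the coordinates of v in block S, zero the others.\<close>
definition block_embed :: "'n set \<Rightarrow> real^'n \<Rightarrow> real^'n" where
  "block_embed S v = (\<chi> i. if i \<in> S then v $ i else 0)"

end

theory Submission
  imports Defs
begin

lemma block_embed_bl: "bounded_linear (block_embed S)"
proof -
  have "linear (block_embed S)"
    by (rule linearI) (auto simp: block_embed_def vec_eq_iff)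
  then show ?thesis by (simp add: linear_conv_bounded_linear)
qed

lemma norm_block_embed: "norm (block_embed S v) \<le> norm v"
  by (rule norm_le_componentwise_cart) (simp add: block_embed_def)

lemma deriv_lip_bound:
  fixes F :: "'a::real_normed_vector \<Rightarrow> 'b::real_normed_vector"
  assumes der: "(F has_derivative F') (at x)"
    and lip: "\<And>y. norm (F y - F x) \<le> K * norm (y - x)"
  shows "norm (F' v) \<le> K * norm v"
proof (cases "v = 0")
  case True
  have "linear F'" using der has_derivative_linear by blast
  then show ?thesis using True by (simp add: linear_0)
next
  case False
  have bl: "bounded_linear F'" using der has_derivative_bounded_linear by blast
  have "norm (F' v) \<le> K * norm v + e" if e: "e > 0" for e
  proof -
    have ev: "e / norm v > 0" using e False by simp
    from der[unfolded has_derivative_at_alt] ev obtain d where d: "d > 0"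
      and dd: "\<And>y. norm (y - x) < d \<Longrightarrow> norm (F y - F x - F' (y - x)) \<le> (e / norm v) * norm (y - x)"
      by blast
    define t where "t = d / (2 * norm v)"
    have t: "t > 0" using d False by (simp add: t_def)
    have "norm (t *\<^sub>R v) = d / 2" using False d by (simp add: t_def)
    then have "norm ((x + t *\<^sub>R v) - x) < d" using d by simp
    from dd[OF this] have 1: "norm (F (x + t *\<^sub>R v) - F x - F' (t *\<^sub>R v)) \<le> e * t"
      using False t by (simp add: field_simps)
    have 2: "norm (F (x + t *\<^sub>R v) - F x) \<le> K * (t * norm v)"
      using lip[of "x + t *\<^sub>R v"] t by simp
    have "F' (t *\<^sub>R v) = t *\<^sub>R F' v" using bl by (simp add: linear_simps)
    then have "t * norm (F' v) = norm (F' (t *\<^sub>R v))" using t by simp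
    also have "\<dots> \<le> norm (F (x + t *\<^sub>R v) - F x) + norm (F (x + t *\<^sub>R v) - F x - F' (t *\<^sub>R v))"
      by (metis norm_diff_triangle_ineq add_diff_cancel_left' diff_add_cancel norm_minus_commute norm_triangle_ineq4)
    also have "\<dots> \<le> t * (K * norm v + e)" using 1 2 by (simp add: algebra_simps)
    finally show ?thesis using t by simp
  qed
  then show ?thesis by (meson field_le_epsilon)
qed

theorem lemma1:
  fixes f :: "real^'n \<Rightarrow> real"
    and gradf :: "real^'n \<Rightarrow> real^'n"
    and L \<alpha> :: real
    and p :: nat
    and B :: "nat \<Rightarrow> 'n set"
    and s :: nat
  assumes grad: "\<And>x. (f has_derivative (\<lambda>h. gradf x \<bullet> h)) (at x)"
    and C2: "C1_map gradf"
    and Lpos: "L > 0"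
    and Lip: "\<And>x y. norm (gradf x - gradf y) \<le> L * norm (x - y)"
    and blocks_nonempty: "\<And>t. t \<in> {1..p} \<Longrightarrow> B t \<noteq> {}"
    and blocks_disjoint: "\<And>t u. t \<in> {1..p} \<Longrightarrow> u \<in> {1..p} \<Longrightarrow> t \<noteq> u \<Longrightarrow> B t \<inter> B u = {}"
    and blocks_cover: "(\<Union>t\<in>{1..p}. B t) = UNIV"
    and \<alpha>pos: "0 < \<alpha>"
    and \<alpha>small: "\<alpha> < 1 / L"
    and s: "s \<in> {1..p}"
  shows "diffeomorphism (\<lambda>x. x - \<alpha> *\<^sub>R block_embed (B s) (gradf x))"
proof -
  obtain D :: "real^'n \<Rightarrow> ((real^'n) \<Rightarrow>\<^sub>L (real^'n))" where
    D: "\<And>x. (gradf has_derivative blinfun_apply (D x)) (at x)" and Dc: "continuous_on UNIV D"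
    using C2 unfolding C1_map_def by blast
  define P where "P = block_embed (B s)"
  have blP: "bounded_linear P" unfolding P_def by (rule block_embed_bl)
  have nP: "\<And>v. norm (P v) \<le> norm v" unfolding P_def by (rule norm_block_embed)
  define g where "g = (\<lambda>x. x - \<alpha> *\<^sub>R P (gradf x))"
  define c where "c = \<alpha> * L"
  have c0: "0 < c" using \<alpha>pos Lpos by (simp add: c_def)
  have c1: "c < 1" using \<alpha>small Lpos by (simp add: c_def field_simps)
  define K where "K = 1 / (1 - c)"
  have K0: "K > 0" using c1 by (simp add: K_def)
  have hlip: "norm (\<alpha> *\<^sub>R P (gradf x) - \<alpha> *\<^sub>R P (gradf y)) \<le> c * norm (x - y)" for x y
  proof -
    have "\<alpha> *\<^sub>R P (gradf x) - \<alpha> *\<^sub>R P (gradf y) = \<alpha> *\<^sub>R P (gradf x - gradf y)"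
      using blP by (simp add: linear_simps scaleR_diff_right)
    then have "norm (\<alpha> *\<^sub>R P (gradf x) - \<alpha> *\<^sub>R P (gradf y)) = \<alpha> * norm (P (gradf x - gradf y))"
      using \<alpha>pos by simp
    also have "\<dots> \<le> \<alpha> * norm (gradf x - gradf y)" using nP \<alpha>pos by (simp add: mult_left_mono)
    also have "\<dots> \<le> \<alpha> * (L * norm (x - y))" using Lip \<alpha>pos by (simp add: mult_left_mono)
    finally show ?thesis by (simp add: c_def)
  qed
  have glow: "(1 - c) * norm (x - y) \<le> norm (g x - g y)" for x y
  proof -
    have "g x - g y = (x - y) - (\<alpha> *\<^sub>R P (gradf x) - \<alpha> *\<^sub>R P (gradf y))"
      by (simp add: g_def algebra_simps)
    then have "norm (x - y) \<le> norm (g x - g y) + norm (\<alpha> *\<^sub>R P (gradf x) - \<alpha> *\<^sub>R P (gradf y))"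
      by (metis diff_add_cancel norm_triangle_ineq add.commute)
    then show ?thesis using hlip[of x y] by (simp add: algebra_simps)
  qed
  have injg: "inj g"
  proof (rule injI)
    fix x y assume "g x = g y"
    then have "(1 - c) * norm (x - y) \<le> 0" using glow[of x y] by simp
    then show "x = y" using c1 by (simp add: mult_le_0_iff)
  qed
  have surjg: "surj g"
  proof -
    have "\<exists>x. g x = y" for y
    proof -
      have "\<forall>a b. dist (y + \<alpha> *\<^sub>R P (gradf a)) (y + \<alpha> *\<^sub>R P (gradf b)) \<le> c * dist a b"
        using hlip by (simp add: dist_norm)
      from banach_fix_type[OF _ c1 this] c0 obtain x where "y + \<alpha> *\<^sub>R P (gradf x) = x" by auto
      then have "g x = y" by (auto simp: g_def algebra_simps)
      then show ?thesis by blast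
    qed
    then show ?thesis by (metis surj_def)
  qed
  have bijg: "bij g" using injg surjg by (simp add: bij_def)
  have Dbound: "norm (D x v) \<le> L * norm v" for x v
    by (rule deriv_lip_bound[OF D]) (simp add: Lip)
  define Pb where "Pb = Blinfun P"
  have Pb: "blinfun_apply Pb = P" unfolding Pb_def using blP by (simp add: bounded_linear_Blinfun_apply)
  define Dg where "Dg = (\<lambda>x. id_blinfun - \<alpha> *\<^sub>R (Pb o\<^sub>L D x))"
  have Dg_apply: "blinfun_apply (Dg x) v = v - \<alpha> *\<^sub>R P (D x v)" for x v
    by (simp add: Dg_def Pb blinfun.diff_left blinfun.scaleR_left)
  have gder: "(g has_derivative blinfun_apply (Dg x)) (at x)" for x
  proof -
    have "((\<lambda>x. x - \<alpha> *\<^sub>R P (gradf x)) has_derivative (\<lambda>v. v - \<alpha> *\<^sub>R P (D x v))) (at x)"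
      by (intro has_derivative_diff has_derivative_id has_derivative_scaleR_right
          bounded_linear.has_derivative[OF blP D] has_derivative_ident)
    moreover have "blinfun_apply (Dg x) = (\<lambda>v. v - \<alpha> *\<^sub>R P (D x v))" using Dg_apply by auto
    ultimately show ?thesis by (simp add: g_def)
  qed
  have Dgc: "continuous_on UNIV Dg"
    unfolding Dg_def by (intro continuous_intros Dc)
  have Dglow: "(1 - c) * norm v \<le> norm (Dg x v)" for x v
  proof -
    have "norm (\<alpha> *\<^sub>R P (D x v)) \<le> c * norm v"
    proof -
      have "norm (\<alpha> *\<^sub>R P (D x v)) = \<alpha> * norm (P (D x v))" using \<alpha>pos by simp
      also have "\<dots> \<le> \<alpha> * (L * norm v)" using nP[of "D x v"] Dbound[of x v] \<alpha>pos
        by (meson mult_left_mono order_trans less_imp_le)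
      finally show ?thesis by (simp add: c_def)
    qed
    moreover have "norm v \<le> norm (Dg x v) + norm (\<alpha> *\<^sub>R P (D x v))"
      unfolding Dg_apply by (metis diff_add_cancel norm_triangle_ineq)
    ultimately show ?thesis by (simp add: algebra_simps)
  qed
  have inv_ex: "\<exists>T::((real^'n) \<Rightarrow>\<^sub>L (real^'n)). (\<forall>v. blinfun_apply T (blinfun_apply (Dg x) v) = v) \<and> (\<forall>w. blinfun_apply (Dg x) (blinfun_apply T w) = w) \<and> norm T \<le> K" for x
  proof -
    have injD: "inj (blinfun_apply (Dg x))"
    proof (rule injI)
      fix a b assume "Dg x a = Dg x b"
      then have "Dg x (a - b) = 0" by (simp add: blinfun.diff_right)
      then have "(1 - c) * norm (a - b) \<le> 0" using Dglow[of "a - b" x] by simp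
      then show "a = b" using c1 by (simp add: mult_le_0_iff)
    qed
    have linD: "linear (blinfun_apply (Dg x))" by (simp add: blinfun.bounded_linear_right bounded_linear.linear)
    obtain G where linG: "linear G" and G: "G \<circ> blinfun_apply (Dg x) = id"
      using linear_injective_left_inverse[OF linD injD] by blast
    have G2: "blinfun_apply (Dg x) \<circ> G = id" using linear_inverse_left[OF linD linG] G by simp
    have blG: "bounded_linear G" using linG by (simp add: linear_conv_bounded_linear)
    define T where "T = Blinfun G"
    have T: "blinfun_apply T = G" unfolding T_def using blG by (simp add: bounded_linear_Blinfun_apply)
    have a: "\<forall>v. T (Dg x v) = v" using G T by (metis comp_apply id_apply)
    have b: "\<forall>w. Dg x (T w) = w" using G2 T by (metis comp_apply id_apply)
    have "norm T \<le> K"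
    proof (rule norm_blinfun_bound)
      show "0 \<le> K" using K0 by simp
      fix w
      have "(1 - c) * norm (T w) \<le> norm w" using Dglow[of "T w" x] b by simp
      then show "norm (T w) \<le> K * norm w" using c1 by (simp add: K_def field_simps)
    qed
    then show ?thesis using a b by blast
  qed
  obtain Inv :: "real^'n \<Rightarrow> ((real^'n) \<Rightarrow>\<^sub>L (real^'n))" where Inv1: "\<And>x v. blinfun_apply (Inv x) (blinfun_apply (Dg x) v) = v" and Inv2: "\<And>x w. blinfun_apply (Dg x) (blinfun_apply (Inv x) w) = w"
    and InvK: "\<And>x. norm (Inv x) \<le> K"
    using choice[OF allI[where P="\<lambda>x. \<exists>T::((real^'n) \<Rightarrow>\<^sub>L (real^'n)). (\<forall>v. blinfun_apply T (blinfun_apply (Dg x) v) = v) \<and> (\<forall>w. blinfun_apply (Dg x) (blinfun_apply T w) = w) \<and> norm T \<le> K", OF inv_ex]] by blast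
  have Invdiff: "norm (Inv a - Inv b) \<le> K * K * norm (Dg a - Dg b)" for a b
  proof -
    have "Inv a - Inv b = Inv a o\<^sub>L (Dg b - Dg a) o\<^sub>L Inv b"
    proof (rule blinfun_eqI)
      fix w
      show "(Inv a - Inv b) w = (Inv a o\<^sub>L (Dg b - Dg a) o\<^sub>L Inv b) w"
        by (simp add: blinfun.diff_left blinfun.diff_right Inv1 Inv2)
    qed
    then have "norm (Inv a - Inv b) \<le> norm (Inv a o\<^sub>L (Dg b - Dg a)) * norm (Inv b)"
      using norm_blinfun_compose by simp
    also have "\<dots> \<le> norm (Inv a) * norm (Dg b - Dg a) * norm (Inv b)"
      by (intro mult_right_mono norm_blinfun_compose norm_ge_zero)
    also have "\<dots> \<le> K * norm (Dg b - Dg a) * K"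
      using InvK K0 by (intro mult_mono) auto
    finally show ?thesis by (simp add: norm_minus_commute algebra_simps)
  qed
  have Invc: "continuous_on UNIV Inv"
    unfolding continuous_on_iff
  proof (intro ballI allI impI)
    fix x :: "real^'n" and e :: real assume "x \<in> UNIV" "e > 0"
    then have e': "e / (K * K + 1) > 0" using K0 by (simp add: add_pos_pos)
    from Dgc[unfolded continuous_on_iff] e' obtain d where d: "d > 0"
      and dd: "\<And>x'. dist x' x < d \<Longrightarrow> dist (Dg x') (Dg x) < e / (K * K + 1)" by blast
    show "\<exists>d>0. \<forall>x'\<in>UNIV. dist x' x < d \<longrightarrow> dist (Inv x') (Inv x) < e"
    proof (intro exI conjI ballI impI)
      show "d > 0" by fact
      fix x' assume "dist x' x < d"
      then have h: "norm (Dg x' - Dg x) < e / (K * K + 1)" using dd by (simp add: dist_norm)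
      have "dist (Inv x') (Inv x) \<le> K * K * norm (Dg x' - Dg x)" using Invdiff by (simp add: dist_norm)
      also have "\<dots> \<le> K * K * (e / (K * K + 1))" using h by (intro mult_left_mono) auto
      also have "\<dots> < e" using \<open>e > 0\<close> K0 by (simp add: field_simps add_pos_pos)
      finally show "dist (Inv x') (Inv x) < e" .
    qed
  qed
  define gi where "gi = inv g"
  have gig: "\<And>x. gi (g x) = x" unfolding gi_def using injg by simp
  have ggi: "\<And>y. g (gi y) = y" unfolding gi_def using surjg by (simp add: surj_f_inv_f)
  have gilip: "K-lipschitz_on UNIV gi"
    unfolding lipschitz_on_def
  proof (intro conjI ballI)
    show "0 \<le> K" using K0 by simp
    fix a b :: "real^'n"
    have "(1 - c) * norm (gi a - gi b) \<le> norm (a - b)" using glow[of "gi a" "gi b"] ggi by simp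
    then show "dist (gi a) (gi b) \<le> K * dist a b" using c1 by (simp add: K_def dist_norm field_simps)
  qed
  have gic: "continuous_on UNIV gi" by (rule lipschitz_on_continuous_on[OF gilip])
  have gider: "(gi has_derivative blinfun_apply (Inv (gi y))) (at y)" for y
  proof -
    have "(gi has_derivative blinfun_apply (Inv (gi y))) (at (g (gi y)))"
    proof (rule has_derivative_inverse_basic_x[OF gder _ _ _ _ open_UNIV])
      show "bounded_linear (blinfun_apply (Inv (gi y)))" by (simp add: blinfun.bounded_linear_right)
      show "blinfun_apply (Inv (gi y)) \<circ> blinfun_apply (Dg (gi y)) = id" using Inv1 by auto
      show "continuous (at (g (gi y))) gi" using gic by (simp add: continuous_on_eq_continuous_at)
    qed (auto simp: gig ggi)
    then show ?thesis by (simp add: ggi)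
  qed
  have C1g: "C1_map g" unfolding C1_map_def using gder Dgc by blast
  have Ec: "continuous_on UNIV (\<lambda>y. Inv (gi y))"
    by (rule continuous_on_compose2[OF Invc gic]) simp
  have C1gi: "C1_map gi" unfolding C1_map_def
    by (rule exI[where x="\<lambda>y. Inv (gi y)"]) (use gider Ec in blast)
  have "diffeomorphism g" unfolding diffeomorphism_def
    using bijg C1g C1gi unfolding gi_def by blast
  then show ?thesis unfolding g_def P_def .
qed

end
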